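(* Let $m\ge5$ be odd, $h=\frac{m-1}{2}$, and $f_4(x)=x+x^3+x^{2^m-2^{h+2}+2}\in\mathbb{F}_{2^m}[x]$. Let $s^\infty$ be the sequence $s_t=\operatorname{Tr}(f_4(\alpha^t+1))$, $t\ge 0$. If $m\equiv1\pmod 4$ (i.e. $h$ even), the minimal polynomial of $s^\infty$ (generator polynomial of $\mathcal{C}_s$) is $$g_s(x)=\prod_{i\in\Gamma_{(h-1)}}m_{\alpha^{-(i+2^{h})}}(x)\prod_{\substack{2\le j\le h-2\\ j\text{ even}}}\Big(\prod_{i\in\Gamma_{(h-j)}}m_{\alpha^{-(i+2^{h+1-j})}}(x)\prod_{i\in\Gamma_{(h-j)}\setminus\Gamma_{(h-1-j)}}m_{\alpha^{-(i+2^{h-j})}}(x)\Big)\, m_{\alpha^{-3}}(x)\,m_{\alpha^{-1}}(x)\,(x-1),$$ and if $m\equiv 3\pmod 4$ (i.e. $h$ odd), $$g_s(x)=\prod_{i\in\Gamma_{(h-1)}}m_{\alpha^{-(i+2^{h})}}(x)\prod_{\substack{2\le j\le h-2\\ j\text{ even}}}\Big(\prod_{i\in\Gamma_{(h-j)}}m_{\alpha^{-(i+2^{h+1-j})}}(x)\prod_{i\in\Gamma_{(h-j)}\setminus\Gamma_{(h-1-j)}}m_{\alpha^{-(i+2^{h-j})}}(x)\Big)\, m_{\alpha^{-5}}(x)\,(x-1).$$ The linear span of $s^\infty$ is $L_s=1+m(2^{(m-3)/2}+1)$ if $m\equiv1\pmod4$ and $L_s=1+m(2^{(m-3)/2}-1)$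 if $m\equiv3\pmod4$.
   Context: Let $v=2^m-1$, $\alpha$ a primitive element of $\mathbb{F}_{2^m}$, and $\operatorname{Tr}(x)=\sum_{i=0}^{m-1}x^{2^i}$ the absolute trace from $\mathbb{F}_{2^m}$ to $\mathbb{F}_2$. For a polynomial $F$ over $\mathbb{F}_{2^m}$ the binary sequence $s^\infty=(s_t)_{t\ge0}$ is defined by $s_t=\operatorname{Tr}(F(\alpha^t+1))$; it is periodic with period dividing $v$. Its minimal polynomial $g_s(x)$ is the polynomial $1+c_1x+\dots+c_Lx^L\in\mathbb{F}_2[x]$ of least degree $L$ such that $s_i+c_1s_{i-1}+\dots+c_Ls_{i-L}=0$ for all $i\ge L$; its degree $L_s$ is the linear span of $s^\infty$. $\mathcal{C}_s$ denotes the binary cyclic code of length $v$ with generator polynomial $g_s(x)$. For an integer $i$, $m_{\alpha^i}(x)$ is the minimal polynomial of $\alpha^i$ over $\mathbb{F}_2$. For a positive integer $t$, $\Gamma_{(t)}=\{j:1\le j\le 2^t-1,\ j\text{ odd}\}$. Empty products equal $1$. *)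

theory Defs
  imports "HOL-Computational_Algebra.Polynomial" "HOL-Library.Cardinality"
begin

text \<open>The prime field F_2 is taken to be the subfield {0,1} of the ambient finite field
  of characteristic 2; a polynomial over F_2 is a polynomial all of whose coefficients lie in {0,1}.\<close>

definition F2_poly :: "'a::field poly \<Rightarrow> bool" where
  "F2_poly p \<longleftrightarrow> (\<forall>i. coeff p i \<in> {0, 1})"

definition Tr :: "nat \<Rightarrow> 'a::field \<Rightarrow> 'a" where
  "Tr m x = (\<Sum>i<m. x ^ (2 ^ i))"

definition primitive_elem :: "'a::field \<Rightarrow> bool" where
  "primitive_elem a \<longleftrightarrow> a \<noteq> 0 \<and> (\<forall>x. x \<noteq> 0 \<longrightarrow> (\<exists>k::nat. x = a ^ k))"

definition lin_rec_poly :: "(nat \<Rightarrow> 'a::field) \<Rightarrow> 'a poly \<Rightarrow> bool" where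
  "lin_rec_poly s p \<longleftrightarrow> F2_poly p \<and> coeff p 0 = 1 \<and>
     (\<forall>i\<ge>degree p. (\<Sum>k\<le>degree p. coeff p k * s (i - k)) = 0)"

definition seq_min_poly :: "(nat \<Rightarrow> 'a::field) \<Rightarrow> 'a poly" where
  "seq_min_poly s = (THE p. lin_rec_poly s p \<and> (\<forall>q. lin_rec_poly s q \<longrightarrow> degree p \<le> degree q))"

definition lin_span :: "(nat \<Rightarrow> 'a::field) \<Rightarrow> nat" where
  "lin_span s = degree (seq_min_poly s)"

definition min_poly_F2 :: "'a::field \<Rightarrow> 'a poly" where
  "min_poly_F2 b = (THE p. lead_coeff p = 1 \<and> F2_poly p \<and> poly p b = 0 \<and>
     (\<forall>q. lead_coeff q = 1 \<and> F2_poly q \<and> poly q b = 0 \<longrightarrow> degree p \<le> degree q))"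

definition Gamma :: "nat \<Rightarrow> nat set" where
  "Gamma t = {j. 1 \<le> j \<and> j \<le> 2 ^ t - 1 \<and> odd j}"

end

theory Submission
  imports Defs "HOL-Number_Theory.Cong"
begin


lemma card_of_nat_zero: "of_nat CARD('a::{field,finite}) = (0::'a)"
proof -
  have "(\<Sum>x\<in>(UNIV::'a set). x) = (\<Sum>x\<in>UNIV. x + 1)"
  proof (rule sum.reindex_bij_witness[of _ "\<lambda>x. x + 1" "\<lambda>x. x - 1"])
  qed auto
  also have "\<dots> = (\<Sum>x\<in>UNIV. x) + of_nat CARD('a)"
    by (simp add: sum.distrib)
  finally show ?thesis by simp
qed

lemma fermat_units:
  fixes x :: "'a::{field,finite}"
  assumes "x \<noteq> 0"
  shows "x ^ (CARD('a) - 1) = 1"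
proof -
  let ?U = "UNIV - {0::'a}"
  have "(\<Prod>y\<in>?U. y) = (\<Prod>y\<in>?U. x * y)"
  proof (rule prod.reindex_bij_witness[of _ "\<lambda>y. x * y" "\<lambda>y. inverse x * y"])
  qed (use assms in \<open>auto simp: field_simps\<close>)
  also have "\<dots> = x ^ card ?U * (\<Prod>y\<in>?U. y)"
    by (simp add: prod.distrib)
  finally have "x ^ card ?U = 1"
    by (subgoal_tac "(\<Prod>y\<in>?U. y) \<noteq> 0") (auto simp: prod_zero_iff)
  moreover have "card ?U = CARD('a) - 1" by (simp add: card_Diff_singleton)
  ultimately show ?thesis by simp
qed

locale gf =
  fixes m :: nat and dummy :: "'a::{field,finite}"
  assumes card: "CARD('a) = 2 ^ m" and m_pos: "m \<ge> 1"
begin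

lemma two_zero: "(2::'a) = 0"
proof -
  have "(of_nat (2^m) :: 'a) = 0" using card_of_nat_zero[where 'a='a] card by simp
  hence "(2::'a) ^ m = 0" by simp
  thus ?thesis by simp
qed

lemma add_self [simp]: "(x::'a) + x = 0"
proof -
  have "x + x = 2 * x" by simp
  thus ?thesis using two_zero by simp
qed

lemma neg_eq: "- (x::'a) = x"
  using add_self[of x] by (metis add.inverse_unique)

lemma minus_eq_plus: "(x::'a) - y = x + y"
  by (metis diff_minus_eq_add neg_eq)

lemma of_nat_mod2: "(of_nat k :: 'a) = of_nat (k mod 2)"
proof -
  have "(of_nat k :: 'a) = of_nat (2 * (k div 2) + k mod 2)" by simp
  also have "\<dots> = 2 * of_nat (k div 2) + of_nat (k mod 2)" by (simp only: of_nat_add of_nat_mult) simp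
  finally show ?thesis using two_zero by simp
qed

lemma frob_add: "((x::'a) + y) ^ 2 = x ^ 2 + y ^ 2"
proof -
  have "(x + y) ^ 2 = x^2 + y^2 + 2 * x * y" by (simp add: power2_eq_square algebra_simps)
  thus ?thesis using two_zero by simp
qed

lemma frob_sum: "(\<Sum>i\<in>A. f i :: 'a) ^ 2 = (\<Sum>i\<in>A. f i ^ 2)"
  by (induction A rule: infinite_finite_induct) (auto simp: frob_add)

lemma frobk_add: "((x::'a) + y) ^ (2^k) = x ^ (2^k) + y ^ (2^k)"
proof (induction k)
  case (Suc k)
  have "(x + y) ^ (2 ^ Suc k) = ((x + y) ^ (2^k)) ^ 2" by (simp add: power_mult[symmetric] mult.commute)
  also have "\<dots> = (x ^ (2^k)) ^ 2 + (y ^ (2^k)) ^ 2" using Suc frob_add by simp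
  finally show ?case by (simp add: power_mult[symmetric] mult.commute)
qed simp

lemma pow_n: "(x::'a) \<noteq> 0 \<Longrightarrow> x ^ (2^m - 1) = 1"
  using fermat_units[of x] card by simp

lemma pow_2m: "(x::'a) ^ (2^m) = x"
proof (cases "x = 0")
  case True thus ?thesis by simp
next
  case False
  have "(2::nat)^m = (2^m - 1) + 1" by simp
  hence "x ^ (2^m) = x ^ (2^m - 1) * x" by (metis power_add power_one_right)
  thus ?thesis using pow_n[OF False] by simp
qed

lemma card_minus_one: "of_nat (2^m - 1) = (1::'a)"
proof -
  have "(of_nat (2^m - 1) :: 'a) + 1 = of_nat (2^m)" by (simp add: of_nat_diff)
  also have "\<dots> = 0" using card_of_nat_zero[where 'a='a] card by simp
  finally show ?thesis by (metis add_self add_left_cancel)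
qed

end


context gf begin

lemma sq_eq_iff01: "(c::'a)^2 = c \<longleftrightarrow> c \<in> {0,1}"
proof -
  have "c^2 = c \<longleftrightarrow> c * (c - 1) = 0" by (simp add: power2_eq_square algebra_simps)
  thus ?thesis by auto
qed

lemma F2_poly_iff: "F2_poly (p::'a poly) \<longleftrightarrow> (\<forall>i. coeff p i ^ 2 = coeff p i)"
  unfolding F2_poly_def using sq_eq_iff01 by blast

definition sqp :: "'a poly \<Rightarrow> 'a poly" where "sqp p = map_poly (\<lambda>c. c^2) p"

lemma coeff_sqp: "coeff (sqp p) i = coeff p i ^ 2"
  unfolding sqp_def by (simp add: coeff_map_poly)

lemma sqp_mult: "sqp (p * q) = sqp p * sqp q"
proof (rule poly_eqI)
  fix n
  have "coeff (sqp (p*q)) n = (\<Sum>i\<le>n. coeff p i * coeff q (n-i)) ^ 2"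
    by (simp add: coeff_sqp coeff_mult)
  also have "\<dots> = (\<Sum>i\<le>n. coeff p i ^ 2 * coeff q (n-i) ^ 2)"
    by (simp add: frob_sum power_mult_distrib)
  also have "\<dots> = coeff (sqp p * sqp q) n" by (simp add: coeff_mult coeff_sqp)
  finally show "coeff (sqp (p*q)) n = coeff (sqp p * sqp q) n" .
qed

lemma sqp_prod: "sqp (\<Prod>i\<in>A. f i) = (\<Prod>i\<in>A. sqp (f i))"
proof (induction A rule: infinite_finite_induct)
  case (infinite A) thus ?case by (simp add: sqp_def)
next
  case empty thus ?case by (simp add: sqp_def)
next
  case (insert x F) thus ?case by (simp add: sqp_mult)
qed

lemma sqp_lin: "sqp [:- (c::'a), 1:] = [:- (c^2), 1:]"
  by (rule poly_eqI) (auto simp: coeff_sqp coeff_pCons two_zero split: nat.splits)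

lemma F2_sqp: "F2_poly p \<longleftrightarrow> sqp p = p"
  unfolding F2_poly_iff by (auto simp: poly_eq_iff coeff_sqp)

lemma F2_mult: "F2_poly (p::'a poly) \<Longrightarrow> F2_poly q \<Longrightarrow> F2_poly (p * q)"
  by (simp add: F2_sqp sqp_mult)

lemma F2_prod: "(\<And>i. i \<in> A \<Longrightarrow> F2_poly (f i :: 'a poly)) \<Longrightarrow> F2_poly (\<Prod>i\<in>A. f i)"
  by (simp add: F2_sqp sqp_prod)

lemma F2_poly_sq: "F2_poly (q::'a poly) \<Longrightarrow> poly q (x^2) = (poly q x)^2"
proof -
  assume q: "F2_poly q"
  have "(poly q x)^2 = (\<Sum>i\<le>degree q. (coeff q i * x ^ i)^2)"
    unfolding poly_altdef by (rule frob_sum)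
  also have "\<dots> = (\<Sum>i\<le>degree q. coeff q i * (x^2) ^ i)"
    using q by (simp add: F2_poly_iff power_mult_distrib power_mult[symmetric] mult.commute)
  also have "\<dots> = poly q (x^2)" by (simp add: poly_altdef)
  finally show ?thesis by simp
qed

lemma F2_poly_pow2: "F2_poly (q::'a poly) \<Longrightarrow> poly q (x^(2^k)) = (poly q x)^(2^k)"
proof (induction k)
  case (Suc k)
  have "poly q (x^(2^Suc k)) = poly q ((x^(2^k))^2)" by (simp add: power_mult[symmetric] mult.commute)
  also have "\<dots> = (poly q x ^ (2^k))^2" using Suc F2_poly_sq by simp
  finally show ?case by (simp add: power_mult[symmetric] mult.commute)
qed simp

lemma degree_lin_prod: "finite A \<Longrightarrow> degree (\<Prod>b\<in>A. [:- g b, 1:] :: 'a poly) = card A"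
  by (subst degree_prod_eq_sum_degree) auto

lemma lead_lin_prod: "lead_coeff (\<Prod>b\<in>A. [:- g b, 1:] :: 'a poly) = 1"
  by (simp add: lead_coeff_prod)

lemma min_poly_conj:
  fixes \<beta> :: 'a
  assumes inj: "inj_on (\<lambda>i. \<beta>^(2^i)) {..<m}"
  shows "min_poly_F2 \<beta> = (\<Prod>i<m. [:- (\<beta>^(2^i)), 1:])"
    and "F2_poly (\<Prod>i<m. [:- (\<beta>^(2^i)), 1:])"
proof -
  define Q where "Q = (\<Prod>i<m. [:- (\<beta>^(2^i)), 1:])"
  have degQ: "degree Q = m" unfolding Q_def by (simp add: degree_lin_prod)
  have lcQ: "lead_coeff Q = 1" unfolding Q_def by (rule lead_lin_prod)
  have sqQ: "sqp Q = (\<Prod>i<m. [:- (\<beta>^(2^(Suc i))), 1:])"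
    unfolding Q_def by (simp add: sqp_prod sqp_lin power_mult[symmetric] mult.commute)
  also have "\<dots> = Q"
  proof -
    define f where "f = (\<lambda>i. [:- (\<beta>^(2^i)), 1:])"
    have "(\<Prod>i<m. f (Suc i)) * f 0 = (\<Prod>i<m. f i) * f m"
      using prod.lessThan_Suc_shift[of f m] prod.lessThan_Suc[of f m] by (simp add: mult.commute)
    moreover have "f m = f 0" unfolding f_def using pow_2m[of \<beta>] by simp
    moreover have "f 0 \<noteq> 0" unfolding f_def by simp
    ultimately have "(\<Prod>i<m. f (Suc i)) = (\<Prod>i<m. f i)" by simp
    thus ?thesis unfolding f_def Q_def by simp
  qed
  finally have F2Q: "F2_poly Q" by (simp add: F2_sqp)
  have rootQ: "poly Q (\<beta>^(2^i)) = 0" if "i < m" for i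
    unfolding Q_def poly_prod using that by (auto intro!: prod_zero)
  have Q0: "Q \<noteq> 0" using lcQ by auto
  define conj where "conj = (\<lambda>i. \<beta>^(2^i)) ` {..<m}"
  have cardc: "card conj = m" unfolding conj_def using inj by (simp add: card_image)
  have mindeg: "m \<le> degree q" if "lead_coeff q = 1" "F2_poly q" "poly q \<beta> = 0" for q
  proof -
    have "q \<noteq> 0" using that by auto
    have "conj \<subseteq> {x. poly q x = 0}"
      unfolding conj_def using that F2_poly_pow2[of q \<beta>] by auto
    hence "card conj \<le> card {x. poly q x = 0}"
      using \<open>q \<noteq> 0\<close> by (intro card_mono poly_roots_finite)
    also have "\<dots> \<le> degree q" using \<open>q \<noteq> 0\<close> by (rule card_poly_roots_bound)
    finally show ?thesis using cardc by simp
  qed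
  have rootb: "poly Q \<beta> = 0" using rootQ[of 0] m_pos by simp
  have "min_poly_F2 \<beta> = Q"
    unfolding min_poly_F2_def
  proof (rule the_equality)
    show "lead_coeff Q = 1 \<and> F2_poly Q \<and> poly Q \<beta> = 0 \<and>
      (\<forall>q. lead_coeff q = 1 \<and> F2_poly q \<and> poly q \<beta> = 0 \<longrightarrow> degree Q \<le> degree q)"
      using lcQ F2Q rootb mindeg degQ by auto
  next
    fix p assume p: "lead_coeff p = 1 \<and> F2_poly p \<and> poly p \<beta> = 0 \<and>
      (\<forall>q. lead_coeff q = 1 \<and> F2_poly q \<and> poly q \<beta> = 0 \<longrightarrow> degree p \<le> degree q)"
    have dp: "degree p = m" using p mindeg[of p] lcQ F2Q rootb degQ by force
    show "p = Q"
    proof (rule poly_eqI_degree_lead_coeff[where n=m and A=conj])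
      show "coeff p m = coeff Q m" using p dp lcQ degQ by simp
      show "m \<le> card conj" using cardc by simp
      show "degree p \<le> m" "degree Q \<le> m" using dp degQ by auto
      fix z assume "z \<in> conj"
      then obtain i where "i < m" "z = \<beta>^(2^i)" unfolding conj_def by auto
      thus "poly p z = poly Q z" using rootQ F2_poly_pow2[of p \<beta> i] p by simp
    qed
  qed
  thus "min_poly_F2 \<beta> = (\<Prod>i<m. [:- (\<beta>^(2^i)), 1:])" unfolding Q_def .
  show "F2_poly (\<Prod>i<m. [:- (\<beta>^(2^i)), 1:])" using F2Q unfolding Q_def .
qed

end


context gf begin

lemma rec_sum:
  fixes q :: "'a poly" and B :: "'a set"
  assumes nz: "0 \<notin> B" and i: "i \<ge> degree q"
  shows "(\<Sum>k\<le>degree q. coeff q k * (\<Sum>b\<in>B. b ^ (i - k))) = (\<Sum>b\<in>B. b ^ i * poly q (inverse b))"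
proof -
  have "(\<Sum>k\<le>degree q. coeff q k * (\<Sum>b\<in>B. b ^ (i - k)))
      = (\<Sum>b\<in>B. \<Sum>k\<le>degree q. coeff q k * b ^ (i - k))"
    by (simp add: sum_distrib_left sum.swap[of _ B])
  also have "\<dots> = (\<Sum>b\<in>B. b ^ i * poly q (inverse b))"
  proof (rule sum.cong[OF refl])
    fix b assume b: "b \<in> B"
    hence b0: "b \<noteq> 0" using nz by auto
    have "(\<Sum>k\<le>degree q. coeff q k * b ^ (i - k)) = (\<Sum>k\<le>degree q. b ^ i * (coeff q k * inverse b ^ k))"
    proof (rule sum.cong[OF refl])
      fix k assume "k \<in> {..degree q}"
      hence "k \<le> i" using i by auto
      hence "b ^ (i - k) = b ^ i * inverse b ^ k" using b0 by (simp add: power_diff power_inverse divide_inverse)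
      thus "coeff q k * b ^ (i - k) = b ^ i * (coeff q k * inverse b ^ k)" by simp
    qed
    also have "\<dots> = b ^ i * poly q (inverse b)" by (simp add: poly_altdef sum_distrib_left)
    finally show "(\<Sum>k\<le>degree q. coeff q k * b ^ (i - k)) = b ^ i * poly q (inverse b)" .
  qed
  finally show ?thesis .
qed

lemma geo_zero:
  fixes z :: 'a
  assumes "z \<noteq> 0" "z \<noteq> 1"
  shows "(\<Sum>j<2^m - 1. z ^ (L + j)) = 0"
proof -
  have "(\<Sum>j<2^m - 1. z ^ (L + j)) = z ^ L * (\<Sum>j<2^m - 1. z ^ j)"
    by (simp add: power_add sum_distrib_left)
  also have "(\<Sum>j<2^m - 1. z ^ j) = 0"
    using geometric_sum[OF assms(2), of "2^m - 1"] pow_n[OF assms(1)] by simp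
  finally show ?thesis by simp
qed

lemma seq_min:
  fixes B :: "'a set" and s :: "nat \<Rightarrow> 'a"
  assumes fin: "finite B" and nz: "0 \<notin> B" and s: "\<And>t. s t = (\<Sum>b\<in>B. b ^ t)"
    and F2: "F2_poly (\<Prod>b\<in>B. [:- (inverse b), 1:])"
  shows "seq_min_poly s = (\<Prod>b\<in>B. [:- (inverse b), 1:])" and "lin_span s = card B"
proof -
  define P where "P = (\<Prod>b\<in>B. [:- (inverse b), 1:])"
  have degP: "degree P = card B" unfolding P_def using fin by (rule degree_lin_prod)
  have rootP: "poly P (inverse b) = 0" if "b \<in> B" for b
    unfolding P_def poly_prod using that fin by (auto intro!: prod_zero)
  have c0: "coeff P 0 = 1"
  proof -
    have "coeff P 0 = poly P 0" by (simp add: poly_0_coeff_0)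
    also have "\<dots> = (\<Prod>b\<in>B. - inverse b)" unfolding P_def poly_prod by simp
    finally have "coeff P 0 \<noteq> 0" using nz fin by auto
    thus ?thesis using F2 unfolding P_def F2_poly_def by blast
  qed
  have recP: "lin_rec_poly s P"
    unfolding lin_rec_poly_def
  proof (intro conjI allI impI)
    show "F2_poly P" using F2 unfolding P_def .
    show "coeff P 0 = 1" by (rule c0)
    fix i assume i: "degree P \<le> i"
    have "(\<Sum>k\<le>degree P. coeff P k * s (i - k)) = (\<Sum>b\<in>B. b ^ i * poly P (inverse b))"
      unfolding s using rec_sum[OF nz i] .
    also have "\<dots> = 0" using rootP by simp
    finally show "(\<Sum>k\<le>degree P. coeff P k * s (i - k)) = 0" .
  qed
  have roots: "poly q (inverse b0) = 0" if q: "lin_rec_poly s q" and b0: "b0 \<in> B" for q b0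
  proof -
    define L where "L = degree q"
    define c where "c = (\<lambda>b. poly q (inverse b))"
    have z: "(\<Sum>b\<in>B. b ^ i * c b) = 0" if "i \<ge> L" for i
    proof -
      have "(\<Sum>b\<in>B. b ^ i * c b) = (\<Sum>k\<le>degree q. coeff q k * s (i - k))"
        unfolding s c_def using rec_sum[OF nz, of q i] that L_def by simp
      also have "\<dots> = 0" using q that unfolding lin_rec_poly_def L_def by blast
      finally show ?thesis .
    qed
    have b00: "b0 \<noteq> 0" using b0 nz by auto
    have "0 = (\<Sum>j<2^m - 1. inverse b0 ^ (L + j) * (\<Sum>b\<in>B. b ^ (L + j) * c b))"
      using z by simp
    also have "\<dots> = (\<Sum>b\<in>B. c b * (\<Sum>j<2^m - 1. (b * inverse b0) ^ (L + j)))"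
      by (simp add: sum_distrib_left sum.swap[of _ B] power_mult_distrib mult_ac)
    also have "\<dots> = c b0 * (\<Sum>j<2^m - 1. (b0 * inverse b0) ^ (L + j))
        + (\<Sum>b\<in>B - {b0}. c b * (\<Sum>j<2^m - 1. (b * inverse b0) ^ (L + j)))"
      using fin b0 by (simp add: sum.remove)
    also have "(\<Sum>b\<in>B - {b0}. c b * (\<Sum>j<2^m - 1. (b * inverse b0) ^ (L + j))) = 0"
    proof (rule sum.neutral, rule ballI)
      fix b assume b: "b \<in> B - {b0}"
      hence "b \<noteq> 0" using nz by auto
      hence "b * inverse b0 \<noteq> 0" "b * inverse b0 \<noteq> 1" using b b00 by (auto simp: field_simps)
      thus "c b * (\<Sum>j<2^m - 1. (b * inverse b0) ^ (L + j)) = 0" using geo_zero by simp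
    qed
    also have "(\<Sum>j<2^m - 1. (b0 * inverse b0) ^ (L + j)) = 1"
      using b00 card_minus_one by simp
    finally show ?thesis unfolding c_def by simp
  qed
  have degq: "card B \<le> degree q" if q: "lin_rec_poly s q" for q
  proof -
    have "q \<noteq> 0" using q unfolding lin_rec_poly_def by auto
    have "inverse ` B \<subseteq> {x. poly q x = 0}" using roots[OF q] by auto
    hence "card (inverse ` B) \<le> card {x. poly q x = 0}"
      using \<open>q \<noteq> 0\<close> by (intro card_mono poly_roots_finite)
    also have "\<dots> \<le> degree q" using \<open>q \<noteq> 0\<close> by (rule card_poly_roots_bound)
    finally show ?thesis by (simp add: card_image inj_on_def)
  qed
  have "seq_min_poly s = P"
    unfolding seq_min_poly_def
  proof (rule the_equality)
    show "lin_rec_poly s P \<and> (\<forall>q. lin_rec_poly s q \<longrightarrow> degree P \<le> degree q)"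
      using recP degq degP by auto
  next
    fix p assume p: "lin_rec_poly s p \<and> (\<forall>q. lin_rec_poly s q \<longrightarrow> degree p \<le> degree q)"
    have dp: "degree p = card B" using p degq[of p] recP degP by force
    let ?A = "insert 0 (inverse ` B)"
    have "0 \<notin> inverse ` B" using nz by auto
    hence cA: "card ?A = Suc (card B)" using fin by (simp add: card_image inj_on_def)
    show "p = P"
    proof (rule poly_eqI_degree[where A = ?A])
      fix x assume "x \<in> ?A"
      thus "poly p x = poly P x"
        using roots[of p] p rootP c0 unfolding lin_rec_poly_def
        by (auto simp: poly_0_coeff_0)
    qed (use cA dp degP in auto)
  qed
  thus "seq_min_poly s = (\<Prod>b\<in>B. [:- (inverse b), 1:])" unfolding P_def .
  thus "lin_span s = card B" unfolding lin_span_def using degP P_def by simp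
qed

end


lemma finite_Gamma [simp]: "finite (Gamma t)"
  unfolding Gamma_def by (rule finite_subset[of _ "{..2^t}"]) auto

lemma Gamma_0 [simp]: "Gamma 0 = {}" unfolding Gamma_def by auto
lemma Gamma_1: "Gamma 1 = {1}" unfolding Gamma_def by auto
lemma Gamma_1' [simp]: "Gamma (Suc 0) = {1}" unfolding Gamma_def by auto
lemma Gamma_2: "Gamma 2 = {1,3}" unfolding Gamma_def by (rule set_eqI) (simp, presburger)
lemma Gamma_even [simp]: "2 * x \<notin> Gamma k" unfolding Gamma_def by auto

lemma Gamma_mono: "a \<le> b \<Longrightarrow> Gamma a \<subseteq> Gamma b"
proof -
  assume "a \<le> b"
  hence "(2::nat)^a \<le> 2^b" by simp
  thus ?thesis unfolding Gamma_def by (auto intro: order.trans[OF _ diff_le_mono])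
qed

lemma Gamma_Suc: "Gamma (Suc q) = Gamma q \<union> (\<lambda>i. i + 2^q) ` Gamma q" (is "?L = ?R")
  if "q \<ge> 1"
proof
  have ev: "even ((2::nat)^q)" using that by simp
  show "?L \<subseteq> ?R"
  proof
    fix x assume x: "x \<in> ?L"
    show "x \<in> ?R"
    proof (cases "x < 2^q")
      case True thus ?thesis using x unfolding Gamma_def by auto
    next
      case False
      have "x \<noteq> 2^q" using x ev unfolding Gamma_def by auto
      hence "x - 2^q \<in> Gamma q" using x ev False unfolding Gamma_def by auto
      moreover have "x = (x - 2^q) + 2^q" using False by simp
      ultimately show ?thesis by blast
    qed
  qed
  show "?R \<subseteq> ?L"
    using ev unfolding Gamma_def by auto
qed

lemma Gamma_Suc_disj: "Gamma q \<inter> (\<lambda>i. i + 2^q) ` Gamma q = {}"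
  unfolding Gamma_def by auto

lemma range_split: "{1..<(2::nat)^(Suc q)} = Gamma (Suc q) \<union> (\<lambda>u. 2*u) ` {1..<2^q}" (is "?L = ?R")
proof
  show "?L \<subseteq> ?R"
  proof
    fix x assume x: "x \<in> ?L"
    show "x \<in> ?R"
    proof (cases "odd x")
      case True thus ?thesis using x unfolding Gamma_def by auto
    next
      case False
      then obtain y where "x = 2*y" by auto
      thus ?thesis using x by auto
    qed
  qed
  show "?R \<subseteq> ?L" unfolding Gamma_def by auto
qed

lemma range_split_disj: "Gamma (Suc q) \<inter> (\<lambda>u. 2*u) ` {1..<2^q} = {}"
  unfolding Gamma_def by auto

definition Osum :: "(nat \<Rightarrow> 'b::comm_ring_1) \<Rightarrow> nat \<Rightarrow> 'b" where
  "Osum F q = (\<Sum>i\<in>Gamma q. F i)"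
definition Hs :: "(nat \<Rightarrow> 'b::comm_ring_1) \<Rightarrow> nat \<Rightarrow> 'b" where
  "Hs F c = (\<Sum>i\<in>Gamma (c - 1). F (i + 2^c))"
definition Ks :: "(nat \<Rightarrow> 'b::comm_ring_1) \<Rightarrow> nat \<Rightarrow> 'b" where
  "Ks F c = (\<Sum>i\<in>Gamma c - Gamma (c - 1). F (i + 2^c))"
definition Jset :: "nat \<Rightarrow> nat set" where
  "Jset h = {j. 2 \<le> j \<and> j \<le> h - 2 \<and> even j}"

lemma finite_Jset [simp]: "finite (Jset h)"
  unfolding Jset_def by (rule finite_subset[of _ "{..h}"]) auto

lemma Jset_step: "h \<ge> 2 \<Longrightarrow> Jset (h + 2) = insert 2 ((\<lambda>j. j + 2) ` Jset h)"
  unfolding Jset_def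
proof (auto, goal_cases)
  case (1 x)
  then obtain y where "x = y + 2" by (metis add.commute le_add_diff_inverse)
  thus ?case using 1 by (auto intro!: image_eqI[of _ _ y])
qed

lemma Jset_small: "h \<le> 3 \<Longrightarrow> Jset h = {}"
  unfolding Jset_def by auto

lemma Osum_Suc: "q \<ge> 1 \<Longrightarrow> Osum F (Suc q) = Osum F q + Hs F q + Ks F q"
proof -
  assume q: "q \<ge> 1"
  have "Osum F (Suc q) = Osum F q + (\<Sum>i\<in>Gamma q. F (i + 2^q))"
    unfolding Osum_def Gamma_Suc[OF q]
    by (subst sum.union_disjoint) (auto simp: Gamma_Suc_disj sum.reindex inj_on_def)
  also have "(\<Sum>i\<in>Gamma q. F (i + 2^q)) = Hs F q + Ks F q"
    unfolding Hs_def Ks_def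
    using sum.subset_diff[of "Gamma (q - 1)" "Gamma q" "\<lambda>i. F (i + 2^q)"] Gamma_mono[of "q - 1" q]
    by (simp add: add.commute)
  finally show ?thesis by (simp add: add.assoc)
qed

context gf begin

lemma sumA:
  fixes F :: "nat \<Rightarrow> 'a" assumes F2: "\<And>v. F (2 * v) = F v"
  shows "(\<Sum>u\<in>{1..<2^q}. F u) = (\<Sum>k<q. Osum F (Suc k))"
proof (induction q)
  case (Suc q)
  have "(\<Sum>u\<in>{1..<2^Suc q}. F u) = Osum F (Suc q) + (\<Sum>u\<in>{1..<2^q}. F (2*u))"
    unfolding range_split Osum_def
    by (subst sum.union_disjoint) (auto simp: range_split_disj sum.reindex inj_on_def)
  thus ?case using Suc F2 by simp
qed simp

lemma sumB:
  fixes F :: "nat \<Rightarrow> 'a" assumes F2: "\<And>v. F (2 * v) = F v"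
  shows "q \<le> c \<Longrightarrow> (\<Sum>u\<in>{1..<2^q}. F (u + 2^c)) = (\<Sum>k<q. \<Sum>i\<in>Gamma (q - k). F (i + 2^(c - k)))"
proof (induction q arbitrary: c)
  case (Suc q)
  then obtain c' where c: "c = Suc c'" "q \<le> c'" by (cases c) auto
  have "(\<Sum>u\<in>{1..<2^Suc q}. F (u + 2^c)) = (\<Sum>i\<in>Gamma (Suc q). F (i + 2^c)) + (\<Sum>u\<in>{1..<2^q}. F (2*u + 2^c))"
    unfolding range_split
    by (subst sum.union_disjoint) (auto simp: range_split_disj sum.reindex inj_on_def)
  also have "(\<Sum>u\<in>{1..<2^q}. F (2*u + 2^c)) = (\<Sum>u\<in>{1..<2^q}. F (u + 2^c'))"
  proof (rule sum.cong[OF refl])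
    fix u :: nat have "2*u + 2^c = 2 * (u + 2^c')" using c by simp
    thus "F (2*u + 2^c) = F (u + 2^c')" using F2 by metis
  qed
  also have "\<dots> = (\<Sum>k<q. \<Sum>i\<in>Gamma (q - k). F (i + 2^(c' - k)))" using Suc c by simp
  also have "(\<Sum>i\<in>Gamma (Suc q). F (i + 2^c)) + (\<Sum>k<q. \<Sum>i\<in>Gamma (q - k). F (i + 2^(c' - k)))
     = (\<Sum>k<Suc q. \<Sum>i\<in>Gamma (Suc q - k). F (i + 2^(c - k)))"
    by (simp only: sum.lessThan_Suc_shift) (simp add: c)
  finally show ?case .
qed simp

lemma comb_aux:
  fixes a b c hg j x og kg h2 h1 :: 'a
  assumes "a + b + c = hg + j + x"
  shows "a + (b + og + (og + hg + kg)) + (h2 + h1 + c) = h2 + (h1 + kg + j) + x"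
proof -
  have "a + (b + og + (og + hg + kg)) + (h2 + h1 + c) = (a + b + c) + (og + og) + hg + kg + h2 + h1"
    by (simp only: ac_simps)
  also have "\<dots> = (hg + j + x) + 0 + hg + kg + h2 + h1" by (simp only: assms add_self)
  also have "\<dots> = (hg + hg) + (h2 + (h1 + kg + j) + x)" by (simp only: ac_simps add_0_right add_0_left)
  also have "\<dots> = h2 + (h1 + kg + j) + x" by simp
  finally show ?thesis .
qed

lemma comb:
  fixes F :: "nat \<Rightarrow> 'a"
  assumes h: "h \<ge> 2"
  shows "F 3 + (\<Sum>k<h-1. Osum F (Suc k)) + (\<Sum>k<h-1. Hs F (h - k))
     = Hs F h + (\<Sum>j\<in>Jset h. Hs F (h + 1 - j) + Ks F (h - j)) + (if even h then F 3 + F 1 else F 5)"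
  using h
proof (induction h rule: less_induct)
  case (less h)
  have O1: "Osum F 1 = F 1" by (simp add: Osum_def Gamma_1)
  have O2: "Osum F 2 = F 1 + F 3" by (simp add: Osum_def Gamma_2)
  have H2: "Hs F 2 = F 5" by (simp add: Hs_def Gamma_1)
  show ?case
  proof (cases "h \<le> 3")
    case True
    hence "h = 2 \<or> h = 3" using less by auto
    thus ?thesis
    proof
      assume "h = 2" thus ?thesis using O1 H2 Jset_small by (simp add: algebra_simps)
    next
      assume h3: "h = 3"
      have "F 3 + (\<Sum>k<h-1. Osum F (Suc k)) + (\<Sum>k<h-1. Hs F (h - k)) = (F 3 + F 3) + (F 1 + F 1) + Hs F 3 + F 5"
        using h3 O1 O2 H2 by (simp add: eval_nat_numeral algebra_simps two_zero)
      thus ?thesis using h3 Jset_small by simp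
    qed
  next
    case False
    define g where "g = h - 2"
    have hg: "h = g + 2" "g \<ge> 2" using False g_def by auto
    have IH: "F 3 + (\<Sum>k<g-1. Osum F (Suc k)) + (\<Sum>k<g-1. Hs F (g - k))
     = Hs F g + (\<Sum>j\<in>Jset g. Hs F (g + 1 - j) + Ks F (g - j)) + (if even g then F 3 + F 1 else F 5)"
      using less hg by simp
    have g1: "g - 1 + 2 = h - 1" using hg by simp
    have L1: "(\<Sum>k<h-1. Osum F (Suc k)) = (\<Sum>k<g-1. Osum F (Suc k)) + Osum F g + Osum F (Suc g)"
    proof -
      have e: "h - 1 = Suc (Suc (g - 1))" "Suc (g - 1) = g" using hg by auto
      have "(\<Sum>k<Suc (g-1). Osum F (Suc k)) = (\<Sum>k<g-1. Osum F (Suc k)) + Osum F (Suc (g-1))"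
        by (rule sum.lessThan_Suc)
      hence "(\<Sum>k<g. Osum F (Suc k)) = (\<Sum>k<g-1. Osum F (Suc k)) + Osum F g" using e(2) by simp
      thus ?thesis unfolding e(1) sum.lessThan_Suc using e(2) by simp
    qed
    have L2: "(\<Sum>k<h-1. Hs F (h - k)) = Hs F (g + 2) + Hs F (g + 1) + (\<Sum>k<g-1. Hs F (g - k))"
    proof -
      have e: "h - 1 = Suc (Suc (g - 1))" using hg by auto
      show ?thesis by (simp only: e sum.lessThan_Suc_shift) (simp add: hg(1) add.assoc)
    qed
    have OS: "Osum F (Suc g) = Osum F g + Hs F g + Ks F g" using hg by (simp add: Osum_Suc)
    have J: "(\<Sum>j\<in>Jset h. Hs F (h + 1 - j) + Ks F (h - j))
       = Hs F (g + 1) + Ks F g + (\<Sum>j\<in>Jset g. Hs F (g + 1 - j) + Ks F (g - j))"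
      unfolding hg(1) Jset_step[OF hg(2)]
      by (subst sum.insert) (auto simp: sum.reindex inj_on_def Jset_def)
    have ev: "even h = even g" using hg by simp
    have HH: "Hs F h = Hs F (g + 2)" using hg by simp
    show ?thesis
      unfolding L1 L2 J OS ev HH
      by (rule comb_aux[OF IH])
  qed
qed

end


context gf begin

lemma pow_sum2: "N \<ge> 1 \<Longrightarrow> ((z::'a) + 1) ^ (2^N - 1) = (\<Sum>u<2^N. z ^ u)"
proof -
  assume N: "N \<ge> 1"
  have geo: "(z + 1) * (\<Sum>u<2^N. z ^ u) = z ^ (2^N) + 1"
    using one_diff_power_eq[of z "2^N"] by (simp add: minus_eq_plus algebra_simps)
  have fr: "(z + 1) ^ (2^N) = z ^ (2^N) + 1" using frobk_add[of z 1 N] by simp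
  show ?thesis
  proof (cases "z + 1 = 0")
    case True
    hence z1: "z = 1" by (metis add_self add_left_cancel)
    have "(\<Sum>u<(2::nat)^N. (1::'a) ^ u) = of_nat (2^N)" by simp
    also have "\<dots> = 2 ^ N" by simp
    also have "\<dots> = 0" using two_zero N by (simp add: power_0_left)
    moreover have "(2::nat)^N - 1 \<noteq> 0" using one_less_power[of "2::nat" N] N by simp
    ultimately show ?thesis using True z1 N by (simp add: power_0_left)
  next
    case False
    have "(z + 1) * (z + 1) ^ (2^N - 1) = (z + 1) ^ (2^N)"
      by (metis One_nat_def Suc_pred pos2 power_Suc zero_less_power)
    also have "\<dots> = (z + 1) * (\<Sum>u<2^N. z ^ u)" using fr geo by simp
    finally show ?thesis using False by simp
  qed
qed

lemma Tr_add: "Tr m ((a::'a) + b) = Tr m a + Tr m b"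
  unfolding Tr_def by (simp add: frobk_add sum.distrib)

lemma Tr_zero: "Tr m (0::'a) = 0" by (simp add: Tr_def zero_power)

lemma Tr_sum: "Tr m (\<Sum>i\<in>A. f i :: 'a) = (\<Sum>i\<in>A. Tr m (f i))"
  by (induction A rule: infinite_finite_induct) (auto simp: Tr_add Tr_zero)

lemma Tr_one: "odd m \<Longrightarrow> Tr m (1::'a) = 1"
proof -
  assume "odd m"
  have "Tr m (1::'a) = of_nat m" by (simp add: Tr_def)
  also have "\<dots> = of_nat (m mod 2)" by (rule of_nat_mod2)
  finally show ?thesis using \<open>odd m\<close> by (simp add: odd_iff_mod_2_eq_one)
qed

lemma Tr_sq: "Tr m ((y::'a)^2) = Tr m y"
proof -
  define g where "g = (\<lambda>i. y ^ (2^i))"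
  have "(\<Sum>i<m. g (Suc i)) + g 0 = (\<Sum>i<m. g i) + g m"
    using sum.lessThan_Suc_shift[of g m] sum.lessThan_Suc[of g m] by (simp add: add.commute)
  moreover have "g m = g 0" unfolding g_def using pow_2m[of y] by simp
  ultimately have "(\<Sum>i<m. g (Suc i)) = (\<Sum>i<m. g i)" by simp
  thus ?thesis unfolding Tr_def g_def by (simp add: power_mult[symmetric] mult.commute)
qed

end

locale gf2 = gf m dummy for m and dummy :: "'a::{field,finite}" +
  fixes h :: nat and \<alpha> :: 'a
  assumes m_def: "m = 2 * h + 1" and h2: "h \<ge> 2" and prim: "primitive_elem \<alpha>"
begin

definition TF :: "'a \<Rightarrow> nat \<Rightarrow> 'a" where "TF x v = Tr m (x ^ v)"

lemma TF2: "TF x (2 * v) = TF x v"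
  unfolding TF_def using Tr_sq[of "x^v"] by (simp add: power_mult[symmetric] mult.commute)

lemma TF_pow2: "TF x (v * 2^k) = TF x v"
proof (induction k)
  case (Suc k)
  have "v * 2 ^ Suc k = 2 * (v * 2^k)" by simp
  thus ?case using Suc TF2 by metis
qed simp

lemma TF_wrap: "TF x (u * 2^m + c) = TF x (u + c)"
proof -
  have "x ^ (u * 2^m + c) = (x ^ (2^m)) ^ u * x ^ c" by (simp add: power_add power_mult[symmetric] mult.commute)
  also have "\<dots> = x ^ (u + c)" by (simp add: pow_2m power_add)
  finally show ?thesis unfolding TF_def by simp
qed

lemma TF_B: "TF x (u * 2^(h+2) + 2) = TF x (u + 2^h)"
proof -
  have "TF x (u * 2^(h+2) + 2) = TF x (2 * (u * 2^(h+1) + 1))" by (simp add: algebra_simps)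
  also have "\<dots> = TF x (u * 2^(h+1) + 1)" by (rule TF2)
  also have "\<dots> = TF x ((u * 2^(h+1) + 1) * 2^h)" by (rule TF_pow2[symmetric])
  also have "(u * 2^(h+1) + 1) * 2^h = u * 2^m + 2^h"
    by (simp add: m_def algebra_simps power_add[symmetric])
  also have "TF x \<dots> = TF x (u + 2^h)" by (rule TF_wrap)
  finally show ?thesis .
qed

lemma poly_expand:
  fixes x :: 'a
  shows "(x + 1) + (x + 1) ^ 3 + (x + 1) ^ (2 ^ m - 2 ^ (h + 2) + 2)
       = 1 + x ^ 3 + (\<Sum>u\<in>{1..<2^(h-1)}. x ^ (u * 2^(h+2)) + x ^ (u * 2^(h+2) + 2))"
proof -
  have mE: "2 ^ m - 2 ^ (h + 2) + 2 = 2 + 2^(h+2) * (2^(h-1) - 1::nat)"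
  proof -
    have "h + 2 + (h - 1) = m" using h2 m_def by simp
    hence "(2::nat) ^ m = 2^(h+2) * 2^(h-1)" by (metis power_add)
    thus ?thesis by (simp add: right_diff_distrib')
  qed
  define y where "y = x ^ (2^(h+2))"
  have "(x + 1) ^ (2 ^ m - 2 ^ (h + 2) + 2) = (x + 1)^2 * ((x + 1) ^ (2^(h+2))) ^ (2^(h-1) - 1)"
    unfolding mE by (simp only: power_add power_mult)
  also have "(x + 1) ^ (2^(h+2)) = y + 1" unfolding y_def using frobk_add[of x 1 "h+2"] by (simp only: power_one)
  also have "(y + 1) ^ (2^(h-1) - 1) = (\<Sum>u<2^(h-1). y ^ u)" using h2 by (intro pow_sum2) simp
  also have "(\<Sum>u<2^(h-1). y ^ u) = 1 + (\<Sum>u\<in>{1..<2^(h-1)}. y ^ u)"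
  proof -
    have "{..<(2::nat)^(h-1)} = insert 0 {1..<2^(h-1)}" by auto
    thus ?thesis by simp
  qed
  also have "(x + 1)^2 = x^2 + 1" using frob_add[of x 1] by simp
  finally have E0: "(x + 1) ^ (2 ^ m - 2 ^ (h + 2) + 2) = (x^2 + 1) * (1 + (\<Sum>u\<in>{1..<2^(h-1)}. y ^ u))" .
  have yu: "(x^2 + 1) * y ^ u = x ^ (u * 2^(h+2)) + x ^ (u * 2^(h+2) + 2)" for u
  proof -
    have "y ^ u = x ^ (u * 2^(h+2))" unfolding y_def by (simp add: power_mult[symmetric] mult.commute)
    thus ?thesis by (simp add: algebra_simps power_add power2_eq_square)
  qed
  have E: "(x + 1) ^ (2 ^ m - 2 ^ (h + 2) + 2) =
     x^2 + 1 + (\<Sum>u\<in>{1..<2^(h-1)}. x ^ (u * 2^(h+2)) + x ^ (u * 2^(h+2) + 2))"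
    unfolding E0 distrib_left sum_distrib_left yu by simp
  have C: "(x + 1) ^ 3 = x^3 + x^2 + x + 1"
  proof -
    have "(x + 1) ^ 3 = x^3 + x^2 + x + 1 + 2 * (x^2 + x)"
      by (simp add: eval_nat_numeral algebra_simps)
    thus ?thesis using two_zero by simp
  qed
  show ?thesis unfolding E C
    by (simp add: ac_simps) (simp add: algebra_simps two_zero)
qed

lemma s_expand:
  fixes x :: 'a
  shows "Tr m ((x + 1) + (x + 1) ^ 3 + (x + 1) ^ (2 ^ m - 2 ^ (h + 2) + 2))
     = 1 + TF x 3 + (\<Sum>u\<in>{1..<2^(h-1)}. TF x u + TF x (u + 2^h))"
proof -
  have "odd m" by (simp add: m_def)
  have "Tr m ((x + 1) + (x + 1) ^ 3 + (x + 1) ^ (2 ^ m - 2 ^ (h + 2) + 2))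
     = 1 + TF x 3 + (\<Sum>u\<in>{1..<2^(h-1)}. TF x (u * 2^(h+2)) + TF x (u * 2^(h+2) + 2))"
    unfolding poly_expand by (simp add: Tr_add Tr_sum Tr_one[OF \<open>odd m\<close>] TF_def)
  also have "\<dots> = 1 + TF x 3 + (\<Sum>u\<in>{1..<2^(h-1)}. TF x u + TF x (u + 2^h))"
    by (intro arg_cong2[where f="(+)"] refl sum.cong; simp only: TF_pow2 TF_B)
  finally show ?thesis .
qed

lemma s_comb:
  fixes x :: 'a
  shows "Tr m ((x + 1) + (x + 1) ^ 3 + (x + 1) ^ (2 ^ m - 2 ^ (h + 2) + 2))
     = 1 + (Hs (TF x) h + (\<Sum>j\<in>Jset h. Hs (TF x) (h + 1 - j) + Ks (TF x) (h - j))
          + (if even h then TF x 3 + TF x 1 else TF x 5))"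
proof -
  have A: "(\<Sum>u\<in>{1..<2^(h-1)}. TF x u) = (\<Sum>k<h-1. Osum (TF x) (Suc k))"
    by (rule sumA) (rule TF2)
  have B: "(\<Sum>u\<in>{1..<2^(h-1)}. TF x (u + 2^h)) = (\<Sum>k<h-1. Hs (TF x) (h - k))"
  proof -
    have "(\<Sum>u\<in>{1..<2^(h-1)}. TF x (u + 2^h)) = (\<Sum>k<h-1. \<Sum>i\<in>Gamma (h - 1 - k). TF x (i + 2^(h - k)))"
      by (rule sumB) (auto simp: TF2)
    also have "\<dots> = (\<Sum>k<h-1. Hs (TF x) (h - k))"
      unfolding Hs_def by (intro sum.cong refl) (simp add: diff_commute)
    finally show ?thesis .
  qed
  have D: "(\<Sum>u\<in>{1..<2^(h-1)}. TF x u + TF x (u + 2^h)) = (\<Sum>u\<in>{1..<2^(h-1)}. TF x u) + (\<Sum>u\<in>{1..<2^(h-1)}. TF x (u + 2^h))"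
    by (rule sum.distrib)
  show ?thesis unfolding s_expand D A B
    using comb[OF h2, of "TF x"] by (simp add: add.assoc)
qed

end


definition HS :: "nat \<Rightarrow> nat set" where "HS c = (\<lambda>i. i + 2^c) ` Gamma (c - 1)"
definition KS :: "nat \<Rightarrow> nat set" where "KS c = (\<lambda>i. i + 2^c) ` (Gamma c - Gamma (c - 1))"
definition Xs :: "nat \<Rightarrow> nat set" where "Xs h = (if even h then {3,1} else {5})"
definition Rset :: "nat \<Rightarrow> nat set" where
  "Rset h = HS h \<union> (\<Union>j\<in>Jset h. HS (h + 1 - j) \<union> KS (h - j)) \<union> Xs h"

lemma finite_HS [simp]: "finite (HS c)" unfolding HS_def by simp
lemma finite_KS [simp]: "finite (KS c)" unfolding KS_def by simp
lemma finite_Xs [simp]: "finite (Xs h)" unfolding Xs_def by simp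
lemma finite_Rset [simp]: "finite (Rset h)" unfolding Rset_def by simp

lemma HS_reg: "x \<in> HS c \<Longrightarrow> 2^c < x \<and> x < 2^c + 2^(c-1) \<and> (c \<ge> 1 \<longrightarrow> odd x)"
proof -
  assume "x \<in> HS c"
  then obtain i where i: "i \<in> Gamma (c - 1)" "x = i + 2^c" unfolding HS_def by auto
  have p: "(2::nat)^(c-1) \<ge> 1" by simp
  have i1: "1 \<le> i" "i \<le> 2^(c-1) - 1" "odd i" using i(1) unfolding Gamma_def by auto
  have "i < 2^(c-1)" using i1(2) p by linarith
  moreover have "c \<ge> 1 \<longrightarrow> odd x" using i1(3) i(2) by auto
  ultimately show ?thesis using i1(1) i(2) by linarith
qed

lemma KS_reg: "x \<in> KS c \<Longrightarrow> c \<ge> 1 \<Longrightarrow> 2^c + 2^(c-1) \<le> x \<and> x < 2^(Suc c) \<and> odd x"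
proof -
  assume "x \<in> KS c" "c \<ge> 1"
  then obtain i where i: "i \<in> Gamma c" "i \<notin> Gamma (c - 1)" "x = i + 2^c" unfolding KS_def by auto
  have p: "(2::nat)^(c-1) \<ge> 1" by simp
  have e: "(2::nat)^c = 2 * 2^(c-1)" using \<open>c \<ge> 1\<close> by (cases c) auto
  have i1: "1 \<le> i" "i \<le> 2^c - 1" "odd i" using i(1) unfolding Gamma_def by auto
  have "\<not> i \<le> 2^(c-1) - 1" using i(2) i1 unfolding Gamma_def by auto
  hence "i \<ge> 2^(c-1)" by linarith
  moreover have "i < 2^c" using i1(2) e p by linarith
  moreover have "odd x" using i1(3) i(3) \<open>c \<ge> 1\<close> by auto
  moreover have "(2::nat)^(Suc c) = 2 * 2^c" by simp
  ultimately show ?thesis using i(3) by linarith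
qed

lemma HS_upper: "x \<in> HS c \<Longrightarrow> x < 2^(Suc c)"
proof -
  assume "x \<in> HS c"
  hence "x < 2^c + 2^(c-1)" using HS_reg by blast
  moreover have "(2::nat)^(c-1) \<le> 2^c" by simp
  moreover have "(2::nat)^(Suc c) = 2 * 2^c" by simp
  ultimately show ?thesis by linarith
qed

lemma block_unique:
  assumes "2^c \<le> (x::nat)" "x < 2^(Suc c)" "2^c' \<le> x" "x < 2^(Suc c')"
  shows "c = c'"
proof (rule ccontr)
  assume "c \<noteq> c'"
  hence "Suc c \<le> c' \<or> Suc c' \<le> c" by auto
  thus False
  proof
    assume "Suc c \<le> c'"
    hence "(2::nat)^(Suc c) \<le> 2^c'" by (rule power_increasing) simp
    thus False using assms by simp
  next
    assume "Suc c' \<le> c"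
    hence "(2::nat)^(Suc c') \<le> 2^c" by (rule power_increasing) simp
    thus False using assms by simp
  qed
qed

lemma HS_HS: "c \<noteq> c' \<Longrightarrow> HS c \<inter> HS c' = {}"
proof -
  assume a: "c \<noteq> c'"
  { fix x assume x: "x \<in> HS c" "x \<in> HS c'"
    have "(2::nat)^c \<le> x" "(2::nat)^c' \<le> x" using HS_reg[OF x(1)] HS_reg[OF x(2)] by auto
    hence "c = c'" using block_unique HS_upper[OF x(1)] HS_upper[OF x(2)] by blast
    hence False using a by simp }
  thus ?thesis by blast
qed

lemma KS_KS: "c \<noteq> c' \<Longrightarrow> c \<ge> 1 \<Longrightarrow> c' \<ge> 1 \<Longrightarrow> KS c \<inter> KS c' = {}"
proof -
  assume a: "c \<noteq> c'" "c \<ge> 1" "c' \<ge> 1"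
  { fix x assume x: "x \<in> KS c" "x \<in> KS c'"
    have "(2::nat)^c \<le> x" "(2::nat)^c' \<le> x" using KS_reg[OF x(1) a(2)] KS_reg[OF x(2) a(3)] by auto
    hence "c = c'" using block_unique KS_reg[OF x(1) a(2)] KS_reg[OF x(2) a(3)] by blast
    hence False using a by simp }
  thus ?thesis by blast
qed

lemma HS_KS: "c' \<ge> 1 \<Longrightarrow> HS c \<inter> KS c' = {}"
proof -
  assume a: "c' \<ge> 1"
  { fix x assume x: "x \<in> HS c" "x \<in> KS c'"
    have k: "2^c' + 2^(c'-1) \<le> x" "x < 2^(Suc c')" using KS_reg[OF x(2) a] by auto
    have hh: "2^c < x" "x < 2^c + 2^(c-1)" using HS_reg[OF x(1)] by auto
    have "(2::nat)^c' \<le> x" using k by simp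
    hence "c = c'" using block_unique[of c x c'] k hh HS_upper[OF x(1)] by simp
    hence False using k hh by simp }
  thus ?thesis by blast
qed

lemma one_notin: "1 \<notin> HS c" "1 \<notin> KS c"
proof -
  have "(1::nat) \<le> 2^c" by simp
  thus "1 \<notin> HS c" using HS_reg[of 1 c] by linarith
  show "1 \<notin> KS c" unfolding KS_def Gamma_def by auto
qed

lemma three_KS: "3 \<in> KS 1" unfolding KS_def Gamma_def by (auto intro!: image_eqI[of _ _ 1])
lemma five_HS: "5 \<in> HS 2" unfolding HS_def Gamma_def by (auto intro!: image_eqI[of _ _ 1])

lemma card_Gamma: "card (Gamma t) = (if t = 0 then 0 else 2^(t-1))"
proof (induction t)
  case (Suc t)
  show ?case
  proof (cases "t = 0")
    case True thus ?thesis by simp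
  next
    case False
    hence "card (Gamma (Suc t)) = card (Gamma t) + card ((\<lambda>i. i + 2^t) ` Gamma t)"
      using Gamma_Suc[of t] Gamma_Suc_disj[of t] by (simp add: card_Un_disjoint)
    also have "\<dots> = 2 * card (Gamma t)" by (simp add: card_image)
    finally show ?thesis using Suc False by (simp add: power_Suc[symmetric] del: power_Suc)
  qed
qed simp

lemma card_HS: "card (HS c) = card (Gamma (c - 1))"
  unfolding HS_def by (simp add: card_image)

lemma card_KS: "c \<ge> 2 \<Longrightarrow> card (KS c) = 2^(c-2)"
proof -
  assume c: "c \<ge> 2"
  have "card (KS c) = card (Gamma c - Gamma (c-1))" unfolding KS_def by (simp add: card_image inj_on_def)
  also have "\<dots> = card (Gamma c) - card (Gamma (c-1))"
    using Gamma_mono[of "c-1" c] by (intro card_Diff_subset) auto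
  also have "\<dots> = 2^(c-1) - 2^(c-2)"
  proof -
    obtain d where "c = Suc (Suc d)" using c by (metis add_2_eq_Suc le_Suc_ex)
    thus ?thesis by (simp add: card_Gamma)
  qed
  also have "(2::nat)^(c-1) = 2 * 2^(c-2)" using c by (metis Suc_diff_Suc Suc_1 diff_Suc_1 less_le_trans lessI power_Suc)
  finally show ?thesis by simp
qed

lemma Jset_mem: "j \<in> Jset h \<Longrightarrow> 2 \<le> j \<and> j \<le> h - 2 \<and> even j" unfolding Jset_def by auto

lemma Rset_props:
  assumes h: "h \<ge> 2" and r: "r \<in> Rset h"
  shows "odd r" "0 < r" "r < 2^(Suc h)"
proof -
  have p: "odd r \<and> 0 < r \<and> r < 2^(Suc h)"
  proof -
    { assume "r \<in> HS h"
      hence ?thesis using HS_reg[of r h] HS_upper[of r h] h by auto }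
    moreover
    { fix j assume j: "j \<in> Jset h" "r \<in> HS (h + 1 - j)"
      have c: "h + 1 - j \<ge> 1" "h + 1 - j \<le> h" using Jset_mem[OF j(1)] h by auto
      have pw: "(2::nat)^(h + 1 - j) \<le> 2^h" using c(2) by (intro power_increasing) auto
      have "r < 2^(Suc (h + 1 - j))" by (rule HS_upper[OF j(2)])
      hence "r < 2^(Suc h)" using pw by (simp only: power_Suc, linarith?)
      moreover have "odd r" "0 < r" using HS_reg[OF j(2)] c by auto
      ultimately have ?thesis by auto }
    moreover
    { fix j assume j: "j \<in> Jset h" "r \<in> KS (h - j)"
      have c: "h - j \<ge> 1" "h - j \<le> h" using Jset_mem[OF j(1)] h by auto
      have pw: "(2::nat)^(h - j) \<le> 2^h" using c(2) by (intro power_increasing) auto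
      have k: "r < 2^(Suc (h - j))" "odd r" using KS_reg[OF j(2) c(1)] by auto
      hence "r < 2^(Suc h)" using pw by (simp only: power_Suc, linarith?)
      moreover have "0 < r" using k(2) by (cases r) auto
      ultimately have ?thesis using k by auto }
    moreover
    { assume "r \<in> Xs h"
      moreover have "(8::nat) \<le> 2^(Suc h)"
      proof -
        have "(2::nat)^3 \<le> 2^(Suc h)" using h by (intro power_increasing) auto
        thus ?thesis by simp
      qed
      ultimately have ?thesis unfolding Xs_def by (auto split: if_splits) }
    ultimately show ?thesis using r unfolding Rset_def by blast
  qed
  thus "odd r" "0 < r" "r < 2^(Suc h)" by auto
qed

context comm_monoid_set begin

lemma decomp_R:
  assumes h: "h \<ge> 2"
  shows "F g (Rset h) = f (f (F (\<lambda>i. g (i + 2^h)) (Gamma (h - 1)))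
     (F (\<lambda>j. f (F (\<lambda>i. g (i + 2^(h + 1 - j))) (Gamma (h - j)))
                 (F (\<lambda>i. g (i + 2^(h - j))) (Gamma (h - j) - Gamma (h - 1 - j)))) (Jset h)))
     (F g (Xs h))"
proof -
  let ?U = "\<Union>j\<in>Jset h. HS (h + 1 - j) \<union> KS (h - j)"
  have d1: "HS h \<inter> ?U = {}"
  proof -
    { fix j assume j: "j \<in> Jset h"
      have "h \<noteq> h + 1 - j" "h - j \<ge> 1" using Jset_mem[OF j] h by auto
      hence "HS h \<inter> (HS (h + 1 - j) \<union> KS (h - j)) = {}" using HS_HS HS_KS by blast }
    thus ?thesis by blast
  qed
  have d2: "(HS h \<union> ?U) \<inter> Xs h = {}"
  proof (cases "even h")
    case True
    { fix j assume j: "j \<in> Jset h"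
      have "h - j \<ge> 2" using Jset_mem[OF j] h by auto
      hence "3 \<notin> KS (h - j)" using KS_KS[of 1 "h - j"] three_KS by auto }
    moreover have "3 \<notin> HS c" for c using HS_KS[of 1 c] three_KS by auto
    ultimately show ?thesis using True one_notin unfolding Xs_def by auto
  next
    case False
    hence h3: "h \<ge> 3" using h by presburger
    { fix j assume j: "j \<in> Jset h"
      have "h + 1 - j \<ge> 3" using Jset_mem[OF j] h by auto
      hence "5 \<notin> HS (h + 1 - j)" using HS_HS[of 2 "h + 1 - j"] five_HS by auto }
    moreover have "5 \<notin> KS c" if "c \<ge> 1" for c using HS_KS[of c 2] five_HS that by auto
    moreover have "5 \<notin> HS h" using HS_HS[of 2 h] five_HS h3 by auto
    moreover have "h - j \<ge> 1" if "j \<in> Jset h" for j using Jset_mem[OF that] h by auto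
    ultimately show ?thesis using False unfolding Xs_def by auto
  qed
  have d3: "HS (h + 1 - j) \<inter> KS (h - j) = {}" if "j \<in> Jset h" for j
  proof -
    have "h - j \<ge> 1" using Jset_mem[OF that] h by auto
    thus ?thesis by (rule HS_KS)
  qed
  have d4: "(HS (h + 1 - j) \<union> KS (h - j)) \<inter> (HS (h + 1 - j') \<union> KS (h - j')) = {}"
    if "j \<in> Jset h" "j' \<in> Jset h" "j \<noteq> j'" for j j'
  proof -
    have a: "h + 1 - j \<noteq> h + 1 - j'" "h - j \<noteq> h - j'" "h - j \<ge> 1" "h - j' \<ge> 1"
      using Jset_mem[OF that(1)] Jset_mem[OF that(2)] that(3) h by auto
    show ?thesis using HS_HS[OF a(1)] KS_KS[OF a(2-4)] HS_KS[OF a(3)] HS_KS[OF a(4)] by blast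
  qed
  have "F g (Rset h) = f (f (F g (HS h)) (F g ?U)) (F g (Xs h))"
    unfolding Rset_def using d1 d2 by (simp add: union_disjoint)
  also have "F g ?U = F (\<lambda>j. F g (HS (h + 1 - j) \<union> KS (h - j))) (Jset h)"
    using d4 by (intro UNION_disjoint) auto
  also have "\<dots> = F (\<lambda>j. f (F g (HS (h + 1 - j))) (F g (KS (h - j)))) (Jset h)"
    using d3 by (intro cong refl union_disjoint) auto
  also have "F g (HS h) = F (\<lambda>i. g (i + 2^h)) (Gamma (h - 1))"
    unfolding HS_def by (simp add: reindex inj_on_def)
  also have "F (\<lambda>j. f (F g (HS (h + 1 - j))) (F g (KS (h - j)))) (Jset h)
     = F (\<lambda>j. f (F (\<lambda>i. g (i + 2^(h + 1 - j))) (Gamma (h - j)))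
                 (F (\<lambda>i. g (i + 2^(h - j))) (Gamma (h - j) - Gamma (h - 1 - j)))) (Jset h)"
  proof (rule cong[OF refl])
    fix j
    have "F g (HS (h + 1 - j)) = F (\<lambda>i. g (i + 2^(h + 1 - j))) (Gamma (h - j))"
      unfolding HS_def by (simp add: reindex inj_on_def)
    moreover have "F g (KS (h - j)) = F (\<lambda>i. g (i + 2^(h - j))) (Gamma (h - j) - Gamma (h - 1 - j))"
      unfolding KS_def by (simp add: reindex inj_on_def diff_commute)
    ultimately show "f (F g (HS (h + 1 - j))) (F g (KS (h - j))) = f (F (\<lambda>i. g (i + 2^(h + 1 - j))) (Gamma (h - j)))
                 (F (\<lambda>i. g (i + 2^(h - j))) (Gamma (h - j) - Gamma (h - 1 - j)))" by simp
  qed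
  finally show ?thesis .
qed

end


lemma Jsum_card:
  "h \<ge> 2 \<Longrightarrow> (\<Sum>j\<in>Jset h. 2^(h-j-1) + 2^(h-j-2) :: nat) + (if even h then 1 else 2) = 2^(h-2)"
proof (induction h rule: less_induct)
  case (less h)
  show ?case
  proof (cases "h \<le> 3")
    case True
    hence "h = 2 \<or> h = 3" using less by auto
    thus ?thesis using Jset_small by auto
  next
    case False
    define g where "g = h - 2"
    have hg: "h = g + 2" "g \<ge> 2" using False g_def by auto
    have IH: "(\<Sum>j\<in>Jset g. 2^(g-j-1) + 2^(g-j-2) :: nat) + (if even g then 1 else 2) = 2^(g-2)"
      using less hg by simp
    have "(\<Sum>j\<in>Jset h. 2^(h-j-1) + 2^(h-j-2) :: nat) = (2^(g-1) + 2^(g-2)) + (\<Sum>j\<in>Jset g. 2^(g-j-1) + 2^(g-j-2))"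
      unfolding hg(1) Jset_step[OF hg(2)]
      by (subst sum.insert) (auto simp: sum.reindex inj_on_def Jset_def)
    moreover obtain d where d: "g = Suc (Suc d)" using hg(2) by (metis add_2_eq_Suc le_Suc_ex)
    ultimately show ?thesis using IH hg(1) by (auto split: if_splits)
  qed
qed

context gf2 begin

abbreviation "n \<equiv> (2::nat)^m - 1"

lemma n_pos: "n > 0" using one_less_power[of "2::nat" m] m_pos by simp

lemma alpha_ne: "\<alpha> \<noteq> 0" using prim unfolding primitive_elem_def by auto

lemma alpha_mod: "\<alpha> ^ a = \<alpha> ^ (a mod n)"
proof -
  have "\<alpha> ^ a = (\<alpha> ^ n) ^ (a div n) * \<alpha> ^ (a mod n)"
  proof -
    have "a = n * (a div n) + a mod n" by simp
    hence "\<alpha> ^ a = \<alpha> ^ (n * (a div n)) * \<alpha> ^ (a mod n)" by (metis power_add)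
    thus ?thesis by (simp add: power_mult)
  qed
  thus ?thesis using pow_n[OF alpha_ne] by simp
qed

lemma alpha_inj_n: "inj_on (\<lambda>k. \<alpha> ^ k) {..<n}"
proof (rule eq_card_imp_inj_on)
  show "finite {..<n}" by simp
  have "(\<lambda>k. \<alpha> ^ k) ` {..<n} = UNIV - {0}"
  proof
    show "(\<lambda>k. \<alpha> ^ k) ` {..<n} \<subseteq> UNIV - {0}" using alpha_ne by auto
    show "UNIV - {0} \<subseteq> (\<lambda>k. \<alpha> ^ k) ` {..<n}"
    proof
      fix x assume "x \<in> UNIV - {0::'a}"
      then obtain k where "x = \<alpha> ^ k" using prim unfolding primitive_elem_def by auto
      hence "x = \<alpha> ^ (k mod n)" using alpha_mod by simp
      moreover have "n > 0" by (rule n_pos)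
      ultimately show "x \<in> (\<lambda>k. \<alpha> ^ k) ` {..<n}" by auto
    qed
  qed
  thus "card ((\<lambda>k. \<alpha> ^ k) ` {..<n}) = card {..<n}"
    using card by (simp add: card_Diff_singleton)
qed

lemma alpha_eq_iff: "\<alpha> ^ a = \<alpha> ^ b \<longleftrightarrow> [a = b] (mod n)"
proof -
  have "n > 0" by (rule n_pos)
  have "\<alpha> ^ a = \<alpha> ^ b \<longleftrightarrow> \<alpha> ^ (a mod n) = \<alpha> ^ (b mod n)" using alpha_mod by metis
  also have "\<dots> \<longleftrightarrow> a mod n = b mod n"
    using inj_onD[OF alpha_inj_n] \<open>n > 0\<close> by auto
  finally show ?thesis unfolding cong_def .
qed

lemma n_bound: "2 ^ (Suc h) < n"
proof -
  have "(2::nat) ^ (Suc h) * 2 \<le> 2 ^ m"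
  proof -
    have "(2::nat) ^ (Suc (Suc h)) \<le> 2 ^ m" using h2 m_def by (intro power_increasing) auto
    thus ?thesis by simp
  qed
  moreover have "(2::nat) ^ Suc h \<ge> 2" using one_less_power[of 2 "Suc h"] by simp
  ultimately show ?thesis by linarith
qed

lemma rig0:
  assumes v: "odd v" "v < 2^(Suc h)" and v': "odd v'" "v' < 2^(Suc h)"
    and k: "0 < k" "k \<le> h" and c: "[v' * 2^k = v] (mod n)"
  shows False
proof -
  have "(2::nat) ^ k \<le> 2 ^ h" using k by (intro power_increasing) auto
  hence "v' * 2^k < 2^(Suc h) * 2^h" using v'(2) by (intro mult_less_le_imp_less) auto
  also have "(2::nat)^(Suc h) * 2^h = 2^m" by (simp add: m_def power_add[symmetric])
  finally have lt: "v' * 2^k < 2^m" .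
  have ev: "even (v' * 2^k)" using k by simp
  have "odd n" using m_pos by simp
  hence "v' * 2^k \<noteq> n" using ev by metis
  hence "v' * 2^k < n" using lt by linarith
  hence "v' * 2^k = v" using c n_bound v unfolding cong_def by simp
  thus False using ev v by simp
qed

lemma two_m_cong: "[2^m = 1] (mod n)"
proof -
  have "(2::nat)^m = n + 1" using n_pos by simp
  moreover have "[n + 1 = 1] (mod n)" by (simp only: cong_def mod_add_self1)
  ultimately show ?thesis by simp
qed

lemma rig:
  assumes v: "odd v" "v < 2^(Suc h)" and v': "odd v'" "v' < 2^(Suc h)"
    and k: "k < m" and c: "[v' * 2^k = v] (mod n)"
  shows "k = 0 \<and> v' = v"
proof (cases "k = 0")
  case True
  thus ?thesis using c n_bound v v' unfolding cong_def by simp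
next
  case False
  show ?thesis
  proof (cases "k \<le> h")
    case True thus ?thesis using rig0[OF v v' _ True c] False by simp
  next
    case kh: False
    define k' where "k' = m - k"
    have k': "0 < k'" "k' \<le> h" using k kh m_def unfolding k'_def by auto
    have "[v * 2^k' = v' * 2^k * 2^k'] (mod n)" using c by (simp add: cong_scalar_right cong_sym)
    also have "v' * 2^k * 2^k' = v' * 2^m" using k unfolding k'_def by (simp add: power_add[symmetric])
    also have "[v' * 2^m = v' * 1] (mod n)" by (intro cong_scalar_left two_m_cong)
    finally have "[v * 2^k' = v'] (mod n)" by simp
    thus ?thesis using rig0[OF v' v k'] by simp
  qed
qed

lemma alpha_pair_inj:
  assumes r: "odd r" "r < 2^(Suc h)" and r': "odd r'" "r' < 2^(Suc h)"
    and i: "i < m" and i': "i' < m" and e: "\<alpha> ^ (r * 2^i) = \<alpha> ^ (r' * 2^i')"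
  shows "r = r' \<and> i = i'"
proof -
  have c: "[r * 2^i = r' * 2^i'] (mod n)" using e alpha_eq_iff by simp
  have main: "r = r' \<and> i = i'" if a: "odd a" "a < 2^(Suc h)" "odd b" "b < 2^(Suc h)" "j \<le> j'" "j' < m"
      "[a * 2^j = b * 2^j'] (mod n)" "r = a \<and> i = j \<and> r' = b \<and> i' = j' \<or> r = b \<and> i = j' \<and> r' = a \<and> i' = j"
    for a b j j'
  proof -
    have "[a * 2^j * 2^(m - j) = b * 2^j' * 2^(m - j)] (mod n)" using a(7) by (rule cong_scalar_right)
    moreover have "a * 2^j * 2^(m - j) = a * 2^m" using a(5,6) by (simp add: power_add[symmetric])
    moreover have "b * 2^j' * 2^(m - j) = b * 2^(j' - j) * 2^m" using a(5,6) by (simp add: power_add[symmetric])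
    ultimately have "[a * 2^m = b * 2^(j' - j) * 2^m] (mod n)" by simp
    moreover have "[a * 2^m = a * 1] (mod n)" by (intro cong_scalar_left two_m_cong)
    moreover have "[b * 2^(j' - j) * 2^m = b * 2^(j' - j) * 1] (mod n)" by (intro cong_scalar_left two_m_cong)
    ultimately have "[a = b * 2^(j' - j)] (mod n)" by (simp add: cong_sym_eq) (meson cong_sym cong_trans)
    hence "[b * 2^(j' - j) = a] (mod n)" by (rule cong_sym)
    moreover have "j' - j < m" using a(5,6) by linarith
    ultimately have "j' - j = 0 \<and> b = a" using rig[OF a(1,2) a(3,4)] by blast
    thus ?thesis using a(5,8) by auto
  qed
  show ?thesis
  proof (cases "i \<le> i'")
    case True thus ?thesis using main[OF r r' True i' c] by blast
  next
    case False thus ?thesis using main[OF r' r _ i, of i'] c by (auto simp: cong_sym)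
  qed
qed

lemma alpha_pair_ne1:
  assumes r: "0 < r" "r < 2^(Suc h)"
  shows "\<alpha> ^ (r * 2^i) \<noteq> 1"
proof
  assume "\<alpha> ^ (r * 2^i) = 1"
  hence "\<alpha> ^ (r * 2^i) = \<alpha> ^ 0" by simp
  hence "[r * 2^i = 0] (mod n)" using alpha_eq_iff by blast
  hence "n dvd r * 2^i" by (simp add: cong_0_iff)
  moreover have "coprime n (2^i)" using m_pos by (simp add: coprime_commute)
  ultimately have "n dvd r" using coprime_dvd_mult_left_iff by blast
  hence "n \<le> r" using r(1) by (rule dvd_imp_le)
  thus False using r n_bound by linarith
qed

end


context gf2 begin

lemma conj_inj:
  assumes r: "odd r" "r < 2^(Suc h)"
  shows "inj_on (\<lambda>i. (inverse (\<alpha> ^ r)) ^ (2^i)) {..<m}"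
proof (rule inj_onI)
  fix i i' assume i: "i \<in> {..<m}" "i' \<in> {..<m}" and e: "inverse (\<alpha> ^ r) ^ 2 ^ i = inverse (\<alpha> ^ r) ^ 2 ^ i'"
  hence "\<alpha> ^ (r * 2^i) = \<alpha> ^ (r * 2^i')" by (simp add: power_inverse power_mult)
  thus "i = i'" using alpha_pair_inj[OF r r] i by auto
qed

lemma mp_r:
  assumes r: "odd r" "r < 2^(Suc h)"
  shows "min_poly_F2 (inverse (\<alpha> ^ r)) = (\<Prod>i<m. [:- inverse (\<alpha> ^ (r * 2^i)), 1:])"
    and "F2_poly (min_poly_F2 (inverse (\<alpha> ^ r)))"
proof -
  have eq: "(\<Prod>i<m. [:- (inverse (\<alpha> ^ r) ^ (2^i)), 1:]) = (\<Prod>i<m. [:- inverse (\<alpha> ^ (r * 2^i)), 1:])"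
    by (simp add: power_inverse power_mult)
  show "min_poly_F2 (inverse (\<alpha> ^ r)) = (\<Prod>i<m. [:- inverse (\<alpha> ^ (r * 2^i)), 1:])"
    using min_poly_conj(1)[OF conj_inj[OF r]] eq by simp
  show "F2_poly (min_poly_F2 (inverse (\<alpha> ^ r)))"
    using min_poly_conj[OF conj_inj[OF r]] by simp
qed

lemma main_gf2:
  fixes s :: "nat \<Rightarrow> 'a"
  assumes s_def: "\<And>t. s t = Tr m (let y = \<alpha> ^ t + 1 in y + y ^ 3 + y ^ (2 ^ m - 2 ^ (h + 2) + 2))"
  shows "seq_min_poly s = (\<Prod>r\<in>Rset h. min_poly_F2 (inverse (\<alpha> ^ r))) * [:-1, 1:]"
    and "lin_span s = 1 + m * card (Rset h)"
proof -
  define R where "R = Rset h"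
  have Rp: "odd r \<and> 0 < r \<and> r < 2^(Suc h)" if "r \<in> R" for r
    using Rset_props[OF h2] that unfolding R_def by blast
  define E where "E = (\<lambda>(r, i). \<alpha> ^ (r * 2^i))"
  have injE: "inj_on E (R \<times> {..<m})"
  proof (rule inj_onI)
    fix p q assume p: "p \<in> R \<times> {..<m}" and q: "q \<in> R \<times> {..<m}" and e: "E p = E q"
    obtain r i r' i' where pq: "p = (r, i)" "q = (r', i')" by fastforce
    show "p = q" using alpha_pair_inj[of r r' i i'] Rp p q e pq unfolding E_def by auto
  qed
  have ne1: "1 \<notin> E ` (R \<times> {..<m})"
    using alpha_pair_ne1 Rp unfolding E_def by fastforce
  define B where "B = insert 1 (E ` (R \<times> {..<m}))"
  have finB: "finite B" unfolding B_def R_def by simp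
  have nz: "0 \<notin> B" unfolding B_def E_def using alpha_ne by auto
  have sB: "s t = (\<Sum>b\<in>B. b ^ t)" for t
  proof -
    define x where "x = \<alpha> ^ t"
    have "s t = 1 + (Hs (TF x) h + (\<Sum>j\<in>Jset h. Hs (TF x) (h + 1 - j) + Ks (TF x) (h - j))
          + (if even h then TF x 3 + TF x 1 else TF x 5))"
      unfolding s_def Let_def x_def[symmetric] by (rule s_comb)
    also have "Hs (TF x) h + (\<Sum>j\<in>Jset h. Hs (TF x) (h + 1 - j) + Ks (TF x) (h - j))
          + (if even h then TF x 3 + TF x 1 else TF x 5) = (\<Sum>r\<in>R. TF x r)"
      unfolding R_def sum.decomp_R[OF h2] Hs_def Ks_def
      by (simp add: Xs_def diff_commute)
    also have "(\<Sum>r\<in>R. TF x r) = (\<Sum>r\<in>R. \<Sum>i<m. E (r, i) ^ t)"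
      unfolding TF_def Tr_def E_def x_def by (simp add: power_mult[symmetric] mult_ac)
    also have "\<dots> = (\<Sum>p\<in>R \<times> {..<m}. E p ^ t)"
      by (simp add: sum.cartesian_product)
    also have "\<dots> = (\<Sum>b\<in>E ` (R \<times> {..<m}). b ^ t)"
      using injE by (simp add: sum.reindex)
    finally show ?thesis unfolding B_def using ne1 finB B_def by (simp add: R_def)
  qed
  have PB: "(\<Prod>b\<in>B. [:- (inverse b), 1:]) = (\<Prod>r\<in>R. min_poly_F2 (inverse (\<alpha> ^ r))) * [:-1, 1:]"
  proof -
    have "(\<Prod>b\<in>B. [:- (inverse b), 1:]) = [:-1, 1:] * (\<Prod>b\<in>E ` (R \<times> {..<m}). [:- (inverse b), 1:])"
      unfolding B_def using ne1 finB B_def by (simp add: R_def)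
    also have "(\<Prod>b\<in>E ` (R \<times> {..<m}). [:- (inverse b), 1:]) = (\<Prod>p\<in>R \<times> {..<m}. [:- (inverse (E p)), 1:])"
      using injE by (simp add: prod.reindex)
    also have "\<dots> = (\<Prod>r\<in>R. \<Prod>i<m. [:- (inverse (E (r, i))), 1:])"
      by (simp add: prod.cartesian_product)
    also have "\<dots> = (\<Prod>r\<in>R. min_poly_F2 (inverse (\<alpha> ^ r)))"
    proof (rule prod.cong[OF refl])
      fix r assume "r \<in> R"
      thus "(\<Prod>i<m. [:- (inverse (E (r, i))), 1:]) = min_poly_F2 (inverse (\<alpha> ^ r))"
        using mp_r(1)[of r] Rp unfolding E_def by simp
    qed
    finally show ?thesis by (simp add: mult.commute)
  qed
  have F2B: "F2_poly (\<Prod>b\<in>B. [:- (inverse b), 1:])"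
  proof -
    have "F2_poly [:-1, 1::'a:]"
      unfolding F2_poly_def by (auto simp: coeff_pCons neg_eq split: nat.splits)
    moreover have "F2_poly (\<Prod>r\<in>R. min_poly_F2 (inverse (\<alpha> ^ r)))"
      using mp_r(2) Rp by (intro F2_prod) blast
    ultimately show ?thesis unfolding PB by (intro F2_mult)
  qed
  have cB: "card B = 1 + m * card R"
  proof -
    have "card B = Suc (card (E ` (R \<times> {..<m})))" unfolding B_def using ne1 finB B_def by simp
    also have "card (E ` (R \<times> {..<m})) = card R * m" using injE by (simp add: card_image card_cartesian_product)
    finally show ?thesis by simp
  qed
  show "seq_min_poly s = (\<Prod>r\<in>Rset h. min_poly_F2 (inverse (\<alpha> ^ r))) * [:-1, 1:]"
    using seq_min(1)[OF finB nz sB F2B] PB unfolding R_def by simp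
  show "lin_span s = 1 + m * card (Rset h)"
    using seq_min(2)[OF finB nz sB F2B] cB unfolding R_def by simp
qed

end


lemma card_Rset:
  assumes h: "h \<ge> 2"
  shows "card (Rset h) = (if even h then 2^(h-1) + 1 else 2^(h-1) - 1)"
proof -
  have "card (Rset h) = (\<Sum>r\<in>Rset h. 1::nat)" by simp
  also have "\<dots> = card (Gamma (h - 1)) + (\<Sum>j\<in>Jset h. card (Gamma (h - j)) + card (Gamma (h - j) - Gamma (h - 1 - j)))
       + card (Xs h)"
    unfolding sum.decomp_R[OF h] by simp
  also have "(\<Sum>j\<in>Jset h. card (Gamma (h - j)) + card (Gamma (h - j) - Gamma (h - 1 - j)))
      = (\<Sum>j\<in>Jset h. 2^(h-j-1) + 2^(h-j-2))"
  proof (rule sum.cong[OF refl])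
    fix j assume j: "j \<in> Jset h"
    hence hj: "h - j \<ge> 2" using Jset_mem[OF j] h by auto
    have "card (Gamma (h - j) - Gamma (h - 1 - j)) = card (KS (h - j))"
      unfolding KS_def by (simp add: card_image diff_commute)
    also have "\<dots> = 2^(h-j-2)" using card_KS[OF hj] by simp
    finally show "card (Gamma (h - j)) + card (Gamma (h - j) - Gamma (h - 1 - j)) = 2^(h-j-1) + 2^(h-j-2)"
      using hj by (simp add: card_Gamma)
  qed
  also have "card (Gamma (h - 1)) = 2^(h-2)" using h by (simp add: card_Gamma)
  finally have c: "card (Rset h) = 2^(h-2) + (\<Sum>j\<in>Jset h. 2^(h-j-1) + 2^(h-j-2)) + card (Xs h)" .
  have J: "(\<Sum>j\<in>Jset h. 2^(h-j-1) + 2^(h-j-2) :: nat) + (if even h then 1 else 2) = 2^(h-2)"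
    by (rule Jsum_card[OF h])
  obtain d where d: "h = Suc (Suc d)" using h by (metis add_2_eq_Suc le_Suc_ex)
  have e: "(2::nat)^(h-1) = 2 * 2^(h-2)" using d by simp
  show ?thesis using c J e by (auto simp: Xs_def)
qed

theorem lemma8:
  fixes \<alpha> :: "'a::{field,finite}" and m h :: nat and s :: "nat \<Rightarrow> 'a"
  assumes card: "CARD('a) = 2 ^ m"
    and m_odd: "odd m" and m_ge: "m \<ge> 5"
    and h_def: "h = (m - 1) div 2"
    and prim: "primitive_elem \<alpha>"
    and s_def: "\<And>t. s t = Tr m (let y = \<alpha> ^ t + 1 in y + y ^ 3 + y ^ (2 ^ m - 2 ^ (h + 2) + 2))"
  shows
   "(m mod 4 = 1 \<longrightarrow>
      seq_min_poly s =
        (\<Prod>i\<in>Gamma (h - 1). min_poly_F2 (inverse (\<alpha> ^ (i + 2 ^ h)))) *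
        (\<Prod>j\<in>{j. 2 \<le> j \<and> j \<le> h - 2 \<and> even j}.
            (\<Prod>i\<in>Gamma (h - j). min_poly_F2 (inverse (\<alpha> ^ (i + 2 ^ (h + 1 - j))))) *
            (\<Prod>i\<in>Gamma (h - j) - Gamma (h - 1 - j). min_poly_F2 (inverse (\<alpha> ^ (i + 2 ^ (h - j)))))) *
        min_poly_F2 (inverse (\<alpha> ^ 3)) * min_poly_F2 (inverse \<alpha>) * [:-1, 1:]
      \<and> lin_span s = 1 + m * (2 ^ ((m - 3) div 2) + 1))
    \<and> (m mod 4 = 3 \<longrightarrow>
      seq_min_poly s =
        (\<Prod>i\<in>Gamma (h - 1). min_poly_F2 (inverse (\<alpha> ^ (i + 2 ^ h)))) *
        (\<Prod>j\<in>{j. 2 \<le> j \<and> j \<le> h - 2 \<and> even j}.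
            (\<Prod>i\<in>Gamma (h - j). min_poly_F2 (inverse (\<alpha> ^ (i + 2 ^ (h + 1 - j))))) *
            (\<Prod>i\<in>Gamma (h - j) - Gamma (h - 1 - j). min_poly_F2 (inverse (\<alpha> ^ (i + 2 ^ (h - j)))))) *
        min_poly_F2 (inverse (\<alpha> ^ 5)) * [:-1, 1:]
      \<and> lin_span s = 1 + m * (2 ^ ((m - 3) div 2) - 1))"
proof -
  obtain k where k: "m = 2 * k + 1" using m_odd by (rule oddE)
  have mh: "m = 2 * h + 1" using k h_def by simp
  have h2: "h \<ge> 2" using m_ge mh by linarith
  interpret G: gf2 m \<alpha> h \<alpha>
  proof
    show "CARD('a) = 2 ^ m" by (rule card)
    show "1 \<le> m" using mh by simp
    show "m = 2 * h + 1" by (rule mh)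
    show "2 \<le> h" by (rule h2)
    show "primitive_elem \<alpha>" by (rule prim)
  qed
  have main: "seq_min_poly s = (\<Prod>r\<in>Rset h. min_poly_F2 (inverse (\<alpha> ^ r))) * [:-1, 1:]"
    "lin_span s = 1 + m * card (Rset h)"
    using G.main_gf2[OF s_def] by auto
  define Pm where "Pm = (\<Prod>i\<in>Gamma (h - 1). min_poly_F2 (inverse (\<alpha> ^ (i + 2 ^ h)))) *
        (\<Prod>j\<in>{j. 2 \<le> j \<and> j \<le> h - 2 \<and> even j}.
            (\<Prod>i\<in>Gamma (h - j). min_poly_F2 (inverse (\<alpha> ^ (i + 2 ^ (h + 1 - j))))) *
            (\<Prod>i\<in>Gamma (h - j) - Gamma (h - 1 - j). min_poly_F2 (inverse (\<alpha> ^ (i + 2 ^ (h - j))))))"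
  have dec: "(\<Prod>r\<in>Rset h. min_poly_F2 (inverse (\<alpha> ^ r))) = Pm * (\<Prod>r\<in>Xs h. min_poly_F2 (inverse (\<alpha> ^ r)))"
    unfolding prod.decomp_R[OF h2] Pm_def Jset_def by simp
  have m4: "m mod 4 = 1 \<longleftrightarrow> even h" "m mod 4 = 3 \<longleftrightarrow> odd h" "(m - 3) div 2 = h - 1"
    using mh by presburger+
  show ?thesis
    unfolding Pm_def[symmetric]
  proof (intro conjI impI)
    assume "m mod 4 = 1"
    hence ev: "even h" using m4 by simp
    show "seq_min_poly s = Pm * min_poly_F2 (inverse (\<alpha> ^ 3)) * min_poly_F2 (inverse \<alpha>) * [:-1, 1:]"
      using main(1) dec ev by (simp add: Xs_def mult.assoc)
    show "lin_span s = 1 + m * (2 ^ ((m - 3) div 2) + 1)"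
      using main(2) card_Rset[OF h2] ev m4 by simp
  next
    assume "m mod 4 = 3"
    hence od: "odd h" using m4 by simp
    show "seq_min_poly s = Pm * min_poly_F2 (inverse (\<alpha> ^ 5)) * [:-1, 1:]"
      using main(1) dec od by (simp add: Xs_def mult.assoc)
    show "lin_span s = 1 + m * (2 ^ ((m - 3) div 2) - 1)"
      using main(2) card_Rset[OF h2] od m4 by simp
  qed
qed


end
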